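(* Let $n\geq 3$ and let $S$ be a nonempty subset of $[1,n-2]$. Writing $S+1=\{s+1:s\in S\}$, one has $$a_{\{1\}\cup(S+1)}(n+1)=a'_S(n).$$
   Context: $\Pi_n$ is the lattice of set partitions of $[n]$ ordered by refinement; a partition with $k$ blocks has rank $n-k$, and the nontrivial ranks are $1,\dots,n-2$. For $S\subseteq[1,n-2]$, the rank-selected subposet $\Pi_n(S)$ consists of the partitions whose rank lies in $S$; its maximal chains have exactly one element at each rank in $S$. $a_S(n)$ denotes the number of $S_n$-orbits on the set of maximal chains of $\Pi_n(S)$ (equivalently, the multiplicity of the trivial representation in the permutation representation of $S_n$ on these chains), and $a'_S(n)$ denotes the number of orbits of the subgroup $S_{n-1}\times S_1$ (permutations fixing $n$) on these maximal chains. *)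

theory Defs
  imports "HOL-Library.Disjoint_Sets" "HOL-Combinatorics.Permutations"
begin

definition setparts :: "nat \<Rightarrow> nat set set set" where
  "setparts n = {P. partition_on {1..n} P}"

definition refines :: "nat set set \<Rightarrow> nat set set \<Rightarrow> bool" where
  "refines P Q \<longleftrightarrow> (\<forall>B\<in>P. \<exists>B'\<in>Q. B \<subseteq> B')"

definition prank :: "nat \<Rightarrow> nat set set \<Rightarrow> nat" where
  "prank n P = n - card P"

definition rank_sel :: "nat \<Rightarrow> nat set \<Rightarrow> nat set set set" where
  "rank_sel n S = {P \<in> setparts n. prank n P \<in> S}"

definition is_chain :: "nat \<Rightarrow> nat set \<Rightarrow> nat set set set \<Rightarrow> bool" where
  "is_chain n S C \<longleftrightarrow> C \<subseteq> rank_sel n S \<and> (\<forall>P\<in>C. \<forall>Q\<in>C. refines P Q \<or> refines Q P)"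

definition max_chains :: "nat \<Rightarrow> nat set \<Rightarrow> nat set set set set" where
  "max_chains n S = {C. is_chain n S C \<and> (\<forall>D. is_chain n S D \<and> C \<subseteq> D \<longrightarrow> D = C)}"

definition act_chain :: "(nat \<Rightarrow> nat) \<Rightarrow> nat set set set \<Rightarrow> nat set set set" where
  "act_chain \<sigma> C = (\<lambda>P. (\<lambda>B. \<sigma> ` B) ` P) ` C"

definition chain_orbits :: "(nat \<Rightarrow> nat) set \<Rightarrow> nat \<Rightarrow> nat set \<Rightarrow> nat" where
  "chain_orbits G n S = card ((\<lambda>C. {act_chain \<sigma> C | \<sigma>. \<sigma> \<in> G}) ` max_chains n S)"

definition a_S :: "nat set \<Rightarrow> nat \<Rightarrow> nat" where
  "a_S S n = chain_orbits {\<sigma>. \<sigma> permutes {1..n}} n S"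

text \<open>a'_S(n): orbits of S_{n-1} x S_1 (permutations of [n] fixing n).\<close>
definition a'_S :: "nat set \<Rightarrow> nat \<Rightarrow> nat" where
  "a'_S S n = chain_orbits {\<sigma>. \<sigma> permutes {1..n-1}} n S"

end

theory Submission
  imports Defs
begin

lemma part_iff: "partition_on A P \<longleftrightarrow> \<Union>P = A \<and> (\<forall>B\<in>P. \<forall>B'\<in>P. B \<noteq> B' \<longrightarrow> B \<inter> B' = {}) \<and> {} \<notin> P"
  by (simp only: partition_on_def disjoint_def)

lemma part_uniq: "partition_on A P \<Longrightarrow> B \<in> P \<Longrightarrow> B' \<in> P \<Longrightarrow> x \<in> B \<Longrightarrow> x \<in> B' \<Longrightarrow> B = B'"
  unfolding part_iff by blast

lemma part_sub: "partition_on A P \<Longrightarrow> B \<in> P \<Longrightarrow> B \<subseteq> A"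
  unfolding part_iff by blast

lemma part_ex: "partition_on A P \<Longrightarrow> x \<in> A \<Longrightarrow> \<exists>B\<in>P. x \<in> B"
  using partition_onD1 by (metis UnionE)

lemma part_ne: "partition_on A P \<Longrightarrow> B \<in> P \<Longrightarrow> \<exists>x. x \<in> B"
  using partition_onD3 by (metis ex_in_conv)

lemma refines_trans: "refines P Q \<Longrightarrow> refines Q R \<Longrightarrow> refines P R"
  unfolding refines_def by (meson order_trans)

lemma refines_refl: "refines P P"
  unfolding refines_def by auto

lemma refines_card:
  assumes fin: "finite A" and P: "partition_on A P" and Q: "partition_on A Q" and r: "refines P Q"
  shows "card Q \<le> card P \<and> (card Q = card P \<longrightarrow> Q = P)"
proof -
  define g where "g B = (SOME B'. B' \<in> Q \<and> B \<subseteq> B')" for B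
  have g: "g B \<in> Q \<and> B \<subseteq> g B" if "B \<in> P" for B
    unfolding g_def by (rule someI_ex) (use r that in \<open>auto simp: refines_def\<close>)
  have QP: "Q = g ` P"
  proof
    show "g ` P \<subseteq> Q" using g by blast
    show "Q \<subseteq> g ` P"
    proof
      fix B' assume B': "B' \<in> Q"
      obtain x where x: "x \<in> B'" using part_ne[OF Q B'] by blast
      have "x \<in> A" using part_sub[OF Q B'] x by blast
      then obtain B where B: "B \<in> P" "x \<in> B" using part_ex[OF P] by blast
      have "g B = B'" using part_uniq[OF Q _ B' _ x, of "g B"] g[OF B(1)] B(2) by blast
      then show "B' \<in> g ` P" using B by blast
    qed
  qed
  have finP: "finite P" using finite_elements[OF fin P] .
  have le: "card Q \<le> card P" unfolding QP by (rule card_image_le[OF finP])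
  moreover have "Q = P" if eq: "card Q = card P"
  proof -
    have inj: "inj_on g P" using eq_card_imp_inj_on[OF finP] eq QP by simp
    have "g B = B" if B: "B \<in> P" for B
    proof
      show "B \<subseteq> g B" using g[OF B] by blast
      show "g B \<subseteq> B"
      proof
        fix y assume y: "y \<in> g B"
        have "y \<in> A" using part_sub[OF Q] g[OF B] y by blast
        then obtain B2 where B2: "B2 \<in> P" "y \<in> B2" using part_ex[OF P] by blast
        have "g B2 = g B" using part_uniq[OF Q _ _ _ y, of "g B2"] g[OF B2(1)] g[OF B] B2(2) by blast
        then have "B2 = B" using inj B2(1) B by (simp add: inj_on_def)
        then show "y \<in> B" using B2 by simp
      qed
    qed
    then have "g ` P = id ` P" by (intro image_cong) auto
    then show ?thesis using QP by simp
  qed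
  ultimately show ?thesis by blast
qed

lemma part_big_block:
  assumes fin: "finite A" and P: "partition_on A P" and c: "card P < card A"
  shows "\<exists>B\<in>P. \<exists>a\<in>B. \<exists>b\<in>B. a \<noteq> b"
proof (rule ccontr)
  assume nb: "\<not> ?thesis"
  then have le1: "card B \<le> 1" if "B \<in> P" for B
  proof -
    have "finite B" using finite_subset[OF part_sub[OF P that] fin] .
    moreover have "\<forall>a\<in>B. \<forall>b\<in>B. a = b" using nb that by blast
    ultimately show ?thesis by (metis One_nat_def card_le_Suc0_iff_eq)
  qed
  have finP: "finite P" using finite_elements[OF fin P] .
  have "card A = card (\<Union>P)" using partition_onD1[OF P] by simp
  also have "\<dots> \<le> (\<Sum>B\<in>P. card B)" by (rule card_Union_le_sum_card)
  also have "\<dots> \<le> (\<Sum>B\<in>P. 1)" by (rule sum_mono) (use le1 in auto)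
  also have "\<dots> = card P" by simp
  finally show False using c by simp
qed

definition atom :: "nat \<Rightarrow> nat \<Rightarrow> nat \<Rightarrow> nat set set" where
  "atom m a b = insert {a,b} ((\<lambda>i. {i}) ` ({1..m} - {a,b}))"

lemma atom_part: "a \<in> {1..m} \<Longrightarrow> b \<in> {1..m} \<Longrightarrow> partition_on {1..m} (atom m a b)"
  unfolding part_iff atom_def by auto

lemma atom_card: assumes "a \<in> {1..m}" "b \<in> {1..m}" "a \<noteq> b" shows "card (atom m a b) = m - 1"
proof -
  have "{a,b} \<notin> (\<lambda>i. {i}) ` ({1..m} - {a,b})" using assms(3) by (auto simp: doubleton_eq_iff)
  moreover have "card ((\<lambda>i. {i}) ` ({1..m} - {a,b})) = m - 2"
    using assms by (subst card_image) (auto simp: inj_on_def)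
  moreover have "finite ((\<lambda>i. {i}) ` ({1..m} - {a,b}))" by simp
  ultimately have "card (atom m a b) = Suc (m - 2)" unfolding atom_def by simp
  moreover have "m \<ge> 2" using assms by auto
  ultimately show ?thesis by simp
qed

lemma atom_refines:
  assumes Q: "partition_on {1..m} Q" and B: "B \<in> Q" "a \<in> B" "b \<in> B"
  shows "refines (atom m a b) Q"
  unfolding refines_def atom_def
proof
  fix B' assume "B' \<in> insert {a, b} ((\<lambda>i. {i}) ` ({1..m} - {a, b}))"
  then show "\<exists>B''\<in>Q. B' \<subseteq> B''"
  proof
    assume "B' = {a,b}" then show ?thesis using B by blast
  next
    assume "B' \<in> (\<lambda>i. {i}) ` ({1..m} - {a, b})"
    then obtain i where "i \<in> {1..m}" "B' = {i}" by blast
    then show ?thesis using part_ex[OF Q] by blast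
  qed
qed

lemma atom_eq: assumes "atom m a b = atom m c d" "a \<noteq> b" shows "{a,b} = {c,d}"
proof -
  have "{a,b} \<in> atom m c d" using assms(1) unfolding atom_def by auto
  then have "{a,b} = {c,d} \<or> (\<exists>i. {a,b} = {i})" unfolding atom_def by blast
  moreover have "\<not> (\<exists>i. {a,b} = {i})"
  proof
    assume "\<exists>i. {a,b} = {i}"
    then obtain i where i: "{a,b} = {i}" by blast
    then have "a = i" "b = i" by (auto simp: set_eq_iff)
    with assms(2) show False by simp
  qed
  ultimately show ?thesis by blast
qed

definition pact :: "(nat \<Rightarrow> nat) \<Rightarrow> nat set set \<Rightarrow> nat set set" where
  "pact \<sigma> P = (\<lambda>B. \<sigma> ` B) ` P"

lemma pact_part: assumes s: "\<sigma> permutes A" and P: "partition_on A P" shows "partition_on A (pact \<sigma> P)"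
proof -
  have inj: "inj \<sigma>" using permutes_inj[OF s] .
  have "\<Union>(pact \<sigma> P) = \<sigma> ` (\<Union>P)" unfolding pact_def by auto
  also have "\<dots> = A" using partition_onD1[OF P] permutes_image[OF s] by simp
  moreover have "\<forall>B\<in>pact \<sigma> P. \<forall>B'\<in>pact \<sigma> P. B \<noteq> B' \<longrightarrow> B \<inter> B' = {}"
  proof (intro ballI impI)
    fix C C' assume "C \<in> pact \<sigma> P" "C' \<in> pact \<sigma> P" "C \<noteq> C'"
    then obtain B B' where "B \<in> P" "B' \<in> P" "C = \<sigma> ` B" "C' = \<sigma> ` B'" "B \<noteq> B'"
      unfolding pact_def by blast
    then have "B \<inter> B' = {}" using P unfolding part_iff by blast
    then show "C \<inter> C' = {}" using \<open>C = \<sigma> ` B\<close> \<open>C' = \<sigma> ` B'\<close> image_Int[OF inj, of B B'] by simp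
  qed
  moreover have "{} \<notin> pact \<sigma> P" using partition_onD3[OF P] unfolding pact_def by blast
  ultimately show ?thesis unfolding part_iff by blast
qed

lemma pact_card: assumes s: "\<sigma> permutes A" shows "card (pact \<sigma> P) = card P"
proof -
  have "inj \<sigma>" using permutes_inj[OF s] .
  then have "inj_on (\<lambda>B. \<sigma> ` B) P" by (simp add: inj_on_def inj_image_eq_iff)
  then show ?thesis unfolding pact_def by (rule card_image)
qed

lemma pact_refines: assumes r: "refines P Q" shows "refines (pact \<sigma> P) (pact \<sigma> Q)"
  unfolding refines_def
proof
  fix C assume "C \<in> pact \<sigma> P"
  then obtain B where B: "B \<in> P" "C = \<sigma> ` B" unfolding pact_def by auto
  then obtain B' where B': "B' \<in> Q" "B \<subseteq> B'" using r unfolding refines_def by auto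
  have "\<sigma> ` B' \<in> pact \<sigma> Q" using B'(1) unfolding pact_def by simp
  moreover have "C \<subseteq> \<sigma> ` B'" using B(2) B'(2) by auto
  ultimately show "\<exists>C'\<in>pact \<sigma> Q. C \<subseteq> C'" by auto
qed

lemma pact_comp: "pact (\<sigma> \<circ> \<tau>) P = pact \<sigma> (pact \<tau> P)"
  unfolding pact_def image_image by (simp add: comp_def)

lemma pact_id: "pact id P = P"
  unfolding pact_def by simp

lemma pact_atom: assumes s: "\<sigma> permutes {1..m}" shows "pact \<sigma> (atom m a b) = atom m (\<sigma> a) (\<sigma> b)"
proof -
  have inj: "inj \<sigma>" using permutes_inj[OF s] .
  have 1: "\<sigma> ` ({1..m} - {a,b}) = \<sigma> ` {1..m} - \<sigma> ` {a,b}" by (rule image_set_diff[OF inj])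
  have 2: "\<sigma> ` {1..m} = {1..m}" by (rule permutes_image[OF s])
  have 3: "\<sigma> ` {a,b} = {\<sigma> a, \<sigma> b}" by simp
  have 4: "(\<lambda>B. \<sigma> ` B) ` ((\<lambda>i. {i}) ` X) = (\<lambda>x. {x}) ` (\<sigma> ` X)" for X by auto
  show ?thesis unfolding pact_def atom_def image_insert 4 1 2 3 image_empty by (rule refl)
qed

definition lift :: "nat \<Rightarrow> nat set set \<Rightarrow> nat set set" where
  "lift n P = (\<lambda>B. if n \<in> B then insert (Suc n) B else B) ` P"

definition unlift :: "nat \<Rightarrow> nat set set \<Rightarrow> nat set set" where
  "unlift n Q = (\<lambda>B. B - {Suc n}) ` Q"

lemma lift_blk_minus:
  assumes "partition_on {1..n} P" "B \<in> P"
  shows "(if n \<in> B then insert (Suc n) B else B) - {Suc n} = B"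
proof -
  have "Suc n \<notin> B" using part_sub[OF assms] by auto
  then show ?thesis by auto
qed

lemma unlift_lift: assumes P: "partition_on {1..n} P" shows "unlift n (lift n P) = P"
proof -
  have "unlift n (lift n P) = (\<lambda>B. (if n \<in> B then insert (Suc n) B else B) - {Suc n}) ` P"
    unfolding unlift_def lift_def image_image by simp
  also have "\<dots> = id ` P" by (rule image_cong) (auto simp: lift_blk_minus[OF P])
  finally show ?thesis by simp
qed

lemma lift_card: assumes P: "partition_on {1..n} P" shows "card (lift n P) = card P"
proof -
  have "inj_on (\<lambda>B. if n \<in> B then insert (Suc n) B else B) P"
  proof (rule inj_onI)
    fix B1 B2 assume "B1 \<in> P" "B2 \<in> P" and e: "(if n \<in> B1 then insert (Suc n) B1 else B1) = (if n \<in> B2 then insert (Suc n) B2 else B2)"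
    then show "B1 = B2" using lift_blk_minus[OF P \<open>B1 \<in> P\<close>] lift_blk_minus[OF P \<open>B2 \<in> P\<close>] by metis
  qed
  then show ?thesis unfolding lift_def by (rule card_image)
qed

lemma lift_part: assumes n: "n \<ge> 1" and P: "partition_on {1..n} P" shows "partition_on {1..Suc n} (lift n P)"
proof -
  define f where "f B = (if n \<in> B then insert (Suc n) B else B)" for B
  have sub: "B \<subseteq> {1..n}" if "B \<in> P" for B using part_sub[OF P that] .
  obtain Bn where Bn: "Bn \<in> P" "n \<in> Bn" using part_ex[OF P, of n] n by auto
  have U: "\<Union>(f ` P) = {1..Suc n}"
  proof
    show "\<Union>(f ` P) \<subseteq> {1..Suc n}"
    proof (rule UN_least)
      fix B assume "B \<in> P" then have "B \<subseteq> {1..n}" by (rule sub)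
      then show "f B \<subseteq> {1..Suc n}" unfolding f_def by auto
    qed
    show "{1..Suc n} \<subseteq> \<Union>(f ` P)"
    proof
      fix x assume x: "x \<in> {1..Suc n}"
      show "x \<in> \<Union>(f ` P)"
      proof (cases "x = Suc n")
        case True then show ?thesis using Bn unfolding f_def by auto
      next
        case False then have "x \<in> {1..n}" using x by auto
        then obtain B where "B \<in> P" "x \<in> B" using part_ex[OF P] by auto
        then show ?thesis unfolding f_def by auto
      qed
    qed
  qed
  have D: "\<forall>C\<in>f ` P. \<forall>C'\<in>f ` P. C \<noteq> C' \<longrightarrow> C \<inter> C' = {}"
  proof (intro ballI impI)
    fix C C' assume "C \<in> f ` P" "C' \<in> f ` P" "C \<noteq> C'"
    then obtain B B' where BB: "B \<in> P" "B' \<in> P" "C = f B" "C' = f B'" "B \<noteq> B'" by auto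
    then have dis: "B \<inter> B' = {}" using P unfolding part_iff by auto
    have s1: "Suc n \<notin> B" "Suc n \<notin> B'" using sub[OF BB(1)] sub[OF BB(2)] by auto
    have m1: "C - {Suc n} = B" "C' - {Suc n} = B'" using s1 BB(3,4) unfolding f_def by auto
    have "Suc n \<notin> C \<or> Suc n \<notin> C'"
    proof (rule ccontr)
      assume "\<not> ?thesis"
      then have "n \<in> B" "n \<in> B'" using s1 BB(3,4) unfolding f_def by (auto split: if_splits)
      then show False using dis by auto
    qed
    then have "C \<inter> C' = (C - {Suc n}) \<inter> (C' - {Suc n})" by auto
    then show "C \<inter> C' = {}" using m1 dis by simp
  qed
  have E: "{} \<notin> f ` P" using partition_onD3[OF P] unfolding f_def by auto
  show ?thesis unfolding part_iff lift_def f_def[symmetric] using U D E by auto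
qed

lemma lift_refines: assumes r: "refines P Q" shows "refines (lift n P) (lift n Q)"
  unfolding refines_def
proof
  fix C assume "C \<in> lift n P"
  then obtain B where B: "B \<in> P" "C = (if n \<in> B then insert (Suc n) B else B)" unfolding lift_def by auto
  then obtain B' where B': "B' \<in> Q" "B \<subseteq> B'" using r unfolding refines_def by auto
  have "(if n \<in> B' then insert (Suc n) B' else B') \<in> lift n Q" using B'(1) unfolding lift_def by simp
  moreover have "C \<subseteq> (if n \<in> B' then insert (Suc n) B' else B')" using B(2) B'(2) by auto
  ultimately show "\<exists>C'\<in>lift n Q. C \<subseteq> C'" by auto
qed

lemma unlift_refines: assumes r: "refines P Q" shows "refines (unlift n P) (unlift n Q)"
  unfolding refines_def
proof
  fix C assume "C \<in> unlift n P"
  then obtain B where B: "B \<in> P" "C = B - {Suc n}" unfolding unlift_def by auto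
  then obtain B' where B': "B' \<in> Q" "B \<subseteq> B'" using r unfolding refines_def by auto
  have "B' - {Suc n} \<in> unlift n Q" using B'(1) unfolding unlift_def by simp
  moreover have "C \<subseteq> B' - {Suc n}" using B(2) B'(2) by auto
  ultimately show "\<exists>C'\<in>unlift n Q. C \<subseteq> C'" by auto
qed

definition atom0 :: "nat \<Rightarrow> nat set set" where
  "atom0 n = atom (Suc n) n (Suc n)"

lemma atom0_part: "n \<ge> 1 \<Longrightarrow> partition_on {1..Suc n} (atom0 n)"
  unfolding atom0_def by (rule atom_part) auto

lemma atom0_card: "n \<ge> 1 \<Longrightarrow> card (atom0 n) = n"
  unfolding atom0_def using atom_card[of n "Suc n" "Suc n"] by auto

lemma atom0_lift: assumes n: "n \<ge> 1" and P: "partition_on {1..n} P" shows "refines (atom0 n) (lift n P)"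
proof -
  obtain Bn where Bn: "Bn \<in> P" "n \<in> Bn" using part_ex[OF P, of n] n by auto
  have "insert (Suc n) Bn \<in> lift n P" using Bn unfolding lift_def by force
  then show ?thesis unfolding atom0_def using atom_refines[OF lift_part[OF n P], of "insert (Suc n) Bn" n "Suc n"] Bn by auto
qed

lemma unlift_part:
  assumes n: "n \<ge> 1" and Q: "partition_on {1..Suc n} Q" and B0: "B0 \<in> Q" "n \<in> B0" "Suc n \<in> B0"
  shows "partition_on {1..n} (unlift n Q) \<and> lift n (unlift n Q) = Q"
proof -
  define g where "g B = B - {Suc n}" for B
  have sub: "B \<subseteq> {1..Suc n}" if "B \<in> Q" for B using part_sub[OF Q that] .
  have U: "\<Union>(g ` Q) = {1..n}"
  proof
    show "\<Union>(g ` Q) \<subseteq> {1..n}" using sub unfolding g_def by fastforce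
    show "{1..n} \<subseteq> \<Union>(g ` Q)"
    proof
      fix x assume x: "x \<in> {1..n}"
      then obtain B where "B \<in> Q" "x \<in> B" using part_ex[OF Q, of x] by auto
      then show "x \<in> \<Union>(g ` Q)" using x unfolding g_def by auto
    qed
  qed
  have D: "\<forall>C\<in>g ` Q. \<forall>C'\<in>g ` Q. C \<noteq> C' \<longrightarrow> C \<inter> C' = {}"
  proof (intro ballI impI)
    fix C C' assume "C \<in> g ` Q" "C' \<in> g ` Q" "C \<noteq> C'"
    then obtain B B' where BB: "B \<in> Q" "B' \<in> Q" "C = g B" "C' = g B'" "B \<noteq> B'" by auto
    then have dis: "B \<inter> B' = {}" using Q unfolding part_iff by auto
    then show "C \<inter> C' = {}" using BB unfolding g_def by auto
  qed
  have E: "{} \<notin> g ` Q"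
  proof
    assume "{} \<in> g ` Q"
    then obtain B where B: "B \<in> Q" "B - {Suc n} = {}" unfolding g_def by auto
    obtain x where x: "x \<in> B" using part_ne[OF Q B(1)] by auto
    then have "x = Suc n" using B by auto
    then have "B = B0" using part_uniq[OF Q B(1) B0(1) x] B0 by auto
    then show False using B B0 by auto
  qed
  have P: "partition_on {1..n} (unlift n Q)" unfolding part_iff unlift_def g_def[symmetric] using U D E by auto
  have "lift n (unlift n Q) = (\<lambda>B. if n \<in> B - {Suc n} then insert (Suc n) (B - {Suc n}) else B - {Suc n}) ` Q"
    unfolding lift_def unlift_def image_image by simp
  also have "\<dots> = id ` Q"
  proof (rule image_cong)
    fix B assume B: "B \<in> Q"
    show "(if n \<in> B - {Suc n} then insert (Suc n) (B - {Suc n}) else B - {Suc n}) = id B"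
    proof (cases "n \<in> B")
      case True
      then have "B = B0" using part_uniq[OF Q B B0(1)] B0 by auto
      then show ?thesis using True B0 by auto
    next
      case False
      have "Suc n \<notin> B"
      proof
        assume "Suc n \<in> B"
        then have "B = B0" using part_uniq[OF Q B B0(1)] B0 by auto
        then show False using False B0 by auto
      qed
      then show ?thesis using False by auto
    qed
  qed simp
  finally show ?thesis using P by simp
qed

lemma lift_pact:
  assumes inj: "inj \<tau>" and t1: "\<tau> n = n" and t2: "\<tau> (Suc n) = Suc n"
  shows "pact \<tau> (lift n P) = lift n (pact \<tau> P)"
proof -
  have "\<tau> ` (if n \<in> B then insert (Suc n) B else B) = (if n \<in> \<tau> ` B then insert (Suc n) (\<tau> ` B) else \<tau> ` B)" for B
  proof -
    have "n \<in> \<tau> ` B \<longleftrightarrow> n \<in> B" using inj t1 by (metis inj_image_mem_iff)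
    then show ?thesis using t2 by auto
  qed
  then show ?thesis unfolding pact_def lift_def image_image by simp
qed

lemma swap_lift:
  assumes P: "partition_on {1..n} P"
  shows "pact (transpose n (Suc n)) (lift n P) = lift n P"
proof -
  have "transpose n (Suc n) ` (if n \<in> B then insert (Suc n) B else B) = (if n \<in> B then insert (Suc n) B else B)" if B: "B \<in> P" for B
  proof -
    have "Suc n \<notin> B" using part_sub[OF P B] by auto
    then show ?thesis by (auto simp: transpose_def image_iff)
  qed
  then have "pact (transpose n (Suc n)) (lift n P) = id ` lift n P"
    unfolding pact_def lift_def image_image by (intro image_cong) auto
  then show ?thesis by simp
qed

definition Phi :: "nat \<Rightarrow> nat set set set \<Rightarrow> nat set set set" where
  "Phi n C = insert (atom0 n) (lift n ` C)"

definition Psi :: "nat \<Rightarrow> nat set set set \<Rightarrow> nat set set set" where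
  "Psi n E = unlift n ` (E - {atom0 n})"

lemma rs_D: assumes "P \<in> rank_sel n S" "0 \<notin> S"
  shows "partition_on {1..n} P \<and> card P < n \<and> n - card P \<in> S"
proof -
  have "partition_on {1..n} P" "n - card P \<in> S" using assms(1) unfolding rank_sel_def setparts_def prank_def by auto
  moreover then have "n - card P \<noteq> 0" using assms(2) by metis
  ultimately show ?thesis by auto
qed

lemma lift_rs: assumes n: "n \<ge> 1" and S0: "0 \<notin> S" and P: "P \<in> rank_sel n S"
  shows "lift n P \<in> rank_sel (Suc n) ({1} \<union> (\<lambda>s. s + 1) ` S)"
proof -
  have p: "partition_on {1..n} P" "card P < n" "n - card P \<in> S" using rs_D[OF P S0] by auto
  have "prank (Suc n) (lift n P) = (n - card P) + 1" unfolding prank_def lift_card[OF p(1)] using p(2) by simp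
  then show ?thesis using lift_part[OF n p(1)] p(3) unfolding rank_sel_def setparts_def by auto
qed

lemma atom0_rs: assumes n: "n \<ge> 1" shows "atom0 n \<in> rank_sel (Suc n) ({1} \<union> (\<lambda>s. s + 1) ` S)"
  using atom0_part[OF n] atom0_card[OF n] unfolding rank_sel_def setparts_def prank_def by auto

lemma atom0_notin: assumes n: "n \<ge> 1" and S0: "0 \<notin> S" and C: "C \<subseteq> rank_sel n S"
  shows "atom0 n \<notin> lift n ` C"
proof
  assume "atom0 n \<in> lift n ` C"
  then obtain P where P: "P \<in> C" "atom0 n = lift n P" by auto
  have p: "partition_on {1..n} P" "card P < n" using rs_D[of P n S] C P(1) S0 by auto
  have "card (atom0 n) = card P" using P(2) lift_card[OF p(1)] by simp
  then show False using atom0_card[OF n] p(2) by simp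
qed

lemma Phi_chain: assumes n: "n \<ge> 1" and S0: "0 \<notin> S" and D: "is_chain n S D"
  shows "is_chain (Suc n) ({1} \<union> (\<lambda>s. s + 1) ` S) (Phi n D)"
proof -
  have Ds: "D \<subseteq> rank_sel n S" and Dc: "\<forall>P\<in>D. \<forall>Q\<in>D. refines P Q \<or> refines Q P" using D unfolding is_chain_def by auto
  have "Phi n D \<subseteq> rank_sel (Suc n) ({1} \<union> (\<lambda>s. s + 1) ` S)"
    unfolding Phi_def using atom0_rs[OF n] lift_rs[OF n S0] Ds by auto
  moreover have "\<forall>P\<in>Phi n D. \<forall>Q\<in>Phi n D. refines P Q \<or> refines Q P"
  proof (intro ballI)
    fix P Q assume P: "P \<in> Phi n D" and Q: "Q \<in> Phi n D"
    have a: "refines (atom0 n) (lift n R)" if "R \<in> D" for R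
      using atom0_lift[OF n] rs_D[of R n S] Ds that S0 by auto
    show "refines P Q \<or> refines Q P"
    proof (cases "P = atom0 n")
      case True
      then show ?thesis using Q a refines_refl unfolding Phi_def by auto
    next
      case False
      then obtain P' where P': "P' \<in> D" "P = lift n P'" using P unfolding Phi_def by auto
      show ?thesis
      proof (cases "Q = atom0 n")
        case True then show ?thesis using P' a by auto
      next
        case False
        then obtain Q' where Q': "Q' \<in> D" "Q = lift n Q'" using Q unfolding Phi_def by auto
        then show ?thesis using P' Dc lift_refines by metis
      qed
    qed
  qed
  ultimately show ?thesis unfolding is_chain_def by auto
qed

lemma struct:
  assumes n: "n \<ge> 1" and S0: "0 \<notin> S" and E: "is_chain (Suc n) ({1} \<union> (\<lambda>s. s + 1) ` S) E"
    and a: "atom0 n \<in> E" and Q: "Q \<in> E" "Q \<noteq> atom0 n"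
  shows "partition_on {1..n} (unlift n Q) \<and> lift n (unlift n Q) = Q \<and> unlift n Q \<in> rank_sel n S"
proof -
  let ?T = "{1} \<union> (\<lambda>s. s + 1) ` S"
  have Qp: "partition_on {1..Suc n} Q" and Qr: "Suc n - card Q \<in> ?T"
    using E Q(1) unfolding is_chain_def rank_sel_def setparts_def prank_def by auto
  have cmp: "refines Q (atom0 n) \<or> refines (atom0 n) Q" using E Q(1) a unfolding is_chain_def by auto
  have fin: "finite {1..Suc n}" by simp
  have ap: "partition_on {1..Suc n} (atom0 n)" using atom0_part[OF n] .
  have ac: "card (atom0 n) = n" using atom0_card[OF n] .
  have ra: "refines (atom0 n) Q"
  proof (rule ccontr)
    assume "\<not> refines (atom0 n) Q"
    then have "refines Q (atom0 n)" using cmp by auto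
    from refines_card[OF fin Qp ap this] have "n \<le> card Q" "card Q \<noteq> n" using ac Q(2) by auto
    then have "Suc n - card Q = 0" by simp
    then show False using Qr by auto
  qed
  from refines_card[OF fin ap Qp ra] have "card Q \<le> n" "card Q \<noteq> n" using ac Q(2) by auto
  then have cq: "card Q < n" by simp
  then obtain s where s: "s \<in> S" "Suc n - card Q = s + 1" using Qr by auto
  have "{n, Suc n} \<in> atom0 n" unfolding atom0_def atom_def by simp
  then obtain B0 where B0: "B0 \<in> Q" "{n, Suc n} \<subseteq> B0" using ra unfolding refines_def by auto
  have u: "partition_on {1..n} (unlift n Q) \<and> lift n (unlift n Q) = Q"
    using unlift_part[OF n Qp B0(1)] B0(2) by auto
  have "card (unlift n Q) = card Q" using lift_card[of n "unlift n Q"] u by simp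
  then have "prank n (unlift n Q) = s" unfolding prank_def using s(2) cq by simp
  then show ?thesis using u s(1) unfolding rank_sel_def setparts_def by auto
qed

lemma Psi_chain:
  assumes n: "n \<ge> 1" and S0: "0 \<notin> S" and E: "is_chain (Suc n) ({1} \<union> (\<lambda>s. s + 1) ` S) E"
    and a: "atom0 n \<in> E"
  shows "is_chain n S (Psi n E) \<and> Phi n (Psi n E) = E"
proof -
  have st: "partition_on {1..n} (unlift n Q) \<and> lift n (unlift n Q) = Q \<and> unlift n Q \<in> rank_sel n S"
    if "Q \<in> E - {atom0 n}" for Q using struct[OF n S0 E a] that by auto
  have "Psi n E \<subseteq> rank_sel n S" unfolding Psi_def using st by auto
  moreover have "\<forall>P\<in>Psi n E. \<forall>Q\<in>Psi n E. refines P Q \<or> refines Q P"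
  proof (intro ballI)
    fix P Q assume "P \<in> Psi n E" "Q \<in> Psi n E"
    then obtain P' Q' where "P' \<in> E" "Q' \<in> E" "P = unlift n P'" "Q = unlift n Q'" unfolding Psi_def by auto
    then show "refines P Q \<or> refines Q P" using E unlift_refines unfolding is_chain_def by metis
  qed
  moreover have "lift n ` Psi n E = E - {atom0 n}"
  proof -
    have "lift n ` Psi n E = (\<lambda>Q. lift n (unlift n Q)) ` (E - {atom0 n})" unfolding Psi_def image_image ..
    also have "\<dots> = id ` (E - {atom0 n})" by (rule image_cong) (use st in auto)
    finally show ?thesis by simp
  qed
  then have "Phi n (Psi n E) = E" unfolding Phi_def using a by auto
  ultimately show ?thesis unfolding is_chain_def by auto
qed

lemma Psi_Phi: assumes n: "n \<ge> 1" and S0: "0 \<notin> S" and D: "D \<subseteq> rank_sel n S"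
  shows "Psi n (Phi n D) = D"
proof -
  have "Phi n D - {atom0 n} = lift n ` D" unfolding Phi_def using atom0_notin[OF n S0 D] by auto
  then have "Psi n (Phi n D) = (\<lambda>P. unlift n (lift n P)) ` D" unfolding Psi_def by (simp add: image_image)
  also have "\<dots> = id ` D" by (rule image_cong) (use D rs_D[OF _ S0] unlift_lift in auto)
  finally show ?thesis by simp
qed

lemma Phi_max: assumes n: "n \<ge> 1" and S0: "0 \<notin> S" and C: "C \<in> max_chains n S"
  shows "Phi n C \<in> max_chains (Suc n) ({1} \<union> (\<lambda>s. s + 1) ` S)"
proof -
  let ?T = "{1} \<union> (\<lambda>s. s + 1) ` S"
  have Cc: "is_chain n S C" and Cm: "\<And>D. is_chain n S D \<Longrightarrow> C \<subseteq> D \<Longrightarrow> D = C"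
    using C unfolding max_chains_def by auto
  have Cs: "C \<subseteq> rank_sel n S" using Cc unfolding is_chain_def by auto
  have "E = Phi n C" if E: "is_chain (Suc n) ?T E" and sub: "Phi n C \<subseteq> E" for E
  proof -
    have a: "atom0 n \<in> E" using sub unfolding Phi_def by auto
    from Psi_chain[OF n S0 E a] have pc: "is_chain n S (Psi n E)" "Phi n (Psi n E) = E" by auto
    have "C \<subseteq> Psi n E"
    proof -
      have "Psi n (Phi n C) \<subseteq> Psi n E" unfolding Psi_def using sub by auto
      then show ?thesis using Psi_Phi[OF n S0 Cs] by simp
    qed
    then have "Psi n E = C" using Cm pc(1) by auto
    then show ?thesis using pc(2) by simp
  qed
  then show ?thesis using Phi_chain[OF n S0 Cc] unfolding max_chains_def by auto
qed

lemma Psi_max: assumes n: "n \<ge> 1" and S0: "0 \<notin> S"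
    and E: "E \<in> max_chains (Suc n) ({1} \<union> (\<lambda>s. s + 1) ` S)" and a: "atom0 n \<in> E"
  shows "Psi n E \<in> max_chains n S \<and> Phi n (Psi n E) = E"
proof -
  let ?T = "{1} \<union> (\<lambda>s. s + 1) ` S"
  have Ec: "is_chain (Suc n) ?T E" and Em: "\<And>D. is_chain (Suc n) ?T D \<Longrightarrow> E \<subseteq> D \<Longrightarrow> D = E"
    using E unfolding max_chains_def by auto
  from Psi_chain[OF n S0 Ec a] have pc: "is_chain n S (Psi n E)" "Phi n (Psi n E) = E" by auto
  have "D = Psi n E" if D: "is_chain n S D" and sub: "Psi n E \<subseteq> D" for D
  proof -
    have Ds: "D \<subseteq> rank_sel n S" using D unfolding is_chain_def by auto
    have "E \<subseteq> Phi n D" using pc(2) sub unfolding Phi_def by auto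
    then have "Phi n D = E" using Em Phi_chain[OF n S0 D] by auto
    then show ?thesis using Psi_Phi[OF n S0 Ds] by simp
  qed
  then show ?thesis using pc unfolding max_chains_def by auto
qed

lemma act_pact: "act_chain \<sigma> C = pact \<sigma> ` C"
  unfolding act_chain_def pact_def by (rule refl)

lemma act_chain_ok: assumes s: "\<sigma> permutes {1..m}" and C: "is_chain m S C"
  shows "is_chain m S (act_chain \<sigma> C)"
proof -
  have "pact \<sigma> P \<in> rank_sel m S" if "P \<in> rank_sel m S" for P
    using that pact_part[OF s] pact_card[OF s] unfolding rank_sel_def setparts_def prank_def by auto
  then have "act_chain \<sigma> C \<subseteq> rank_sel m S" using C unfolding is_chain_def act_pact by auto
  moreover have "\<forall>P\<in>act_chain \<sigma> C. \<forall>Q\<in>act_chain \<sigma> C. refines P Q \<or> refines Q P"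
  proof (intro ballI)
    fix P' Q' assume "P' \<in> act_chain \<sigma> C" "Q' \<in> act_chain \<sigma> C"
    then obtain P Q where PQ: "P \<in> C" "Q \<in> C" "P' = pact \<sigma> P" "Q' = pact \<sigma> Q" unfolding act_pact by auto
    then have "refines P Q \<or> refines Q P" using C unfolding is_chain_def by auto
    then show "refines P' Q' \<or> refines Q' P'" using PQ pact_refines by metis
  qed
  ultimately show ?thesis unfolding is_chain_def by auto
qed

lemma act_comp: "act_chain (\<sigma> \<circ> \<tau>) C = act_chain \<sigma> (act_chain \<tau> C)"
  unfolding act_pact pact_comp image_image ..

lemma act_id: "act_chain id C = C"
  unfolding act_pact pact_id by simp

lemma act_inv: assumes s: "\<sigma> permutes A" shows "act_chain (inv \<sigma>) (act_chain \<sigma> C) = C"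
  unfolding act_comp[symmetric] permutes_inv_o(2)[OF s] act_id ..

lemma act_max: assumes s: "\<sigma> permutes {1..m}" and C: "C \<in> max_chains m S"
  shows "act_chain \<sigma> C \<in> max_chains m S"
proof -
  have Cc: "is_chain m S C" and Cm: "\<And>D. is_chain m S D \<Longrightarrow> C \<subseteq> D \<Longrightarrow> D = C"
    using C unfolding max_chains_def by auto
  have si: "inv \<sigma> permutes {1..m}" using permutes_inv[OF s] .
  have "D = act_chain \<sigma> C" if D: "is_chain m S D" and sub: "act_chain \<sigma> C \<subseteq> D" for D
  proof -
    have "act_chain (inv \<sigma>) (act_chain \<sigma> C) \<subseteq> act_chain (inv \<sigma>) D" using sub unfolding act_pact by auto
    then have "C \<subseteq> act_chain (inv \<sigma>) D" using act_inv[OF s] by simp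
    then have "act_chain (inv \<sigma>) D = C" using Cm act_chain_ok[OF si D] by auto
    then have "act_chain (inv (inv \<sigma>)) (act_chain (inv \<sigma>) D) = act_chain (inv (inv \<sigma>)) C" by simp
    then show ?thesis using act_inv[OF si] permutes_inv_inv[OF s] by simp
  qed
  then show ?thesis using act_chain_ok[OF s Cc] unfolding max_chains_def by auto
qed

definition orb :: "nat set \<Rightarrow> nat set set set \<Rightarrow> nat set set set set" where
  "orb A X = {act_chain \<sigma> X | \<sigma>. \<sigma> permutes A}"

lemma orb_eq: "orb A X = orb A Y \<longleftrightarrow> (\<exists>\<sigma>. \<sigma> permutes A \<and> act_chain \<sigma> X = Y)"
proof
  assume "orb A X = orb A Y"
  moreover have "Y \<in> orb A Y" unfolding orb_def using act_id[of Y] permutes_id by force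
  ultimately have "Y \<in> orb A X" by simp
  then obtain \<sigma> where "\<sigma> permutes A" "Y = act_chain \<sigma> X" unfolding orb_def by auto
  then show "\<exists>\<sigma>. \<sigma> permutes A \<and> act_chain \<sigma> X = Y" by auto
next
  assume "\<exists>\<sigma>. \<sigma> permutes A \<and> act_chain \<sigma> X = Y"
  then obtain \<sigma> where s: "\<sigma> permutes A" and Y: "act_chain \<sigma> X = Y" by auto
  show "orb A X = orb A Y"
  proof
    show "orb A X \<subseteq> orb A Y"
    proof
      fix Z assume "Z \<in> orb A X"
      then obtain \<tau> where t: "\<tau> permutes A" "Z = act_chain \<tau> X" unfolding orb_def by auto
      have "X = act_chain (inv \<sigma>) Y" using act_inv[OF s, of X] Y by simp
      then have "Z = act_chain (\<tau> \<circ> inv \<sigma>) Y" using t(2) act_comp by simp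
      moreover have "\<tau> \<circ> inv \<sigma> permutes A" using permutes_compose[OF permutes_inv[OF s] t(1)] .
      ultimately show "Z \<in> orb A Y" unfolding orb_def by auto
    qed
    show "orb A Y \<subseteq> orb A X"
    proof
      fix Z assume "Z \<in> orb A Y"
      then obtain \<tau> where t: "\<tau> permutes A" "Z = act_chain \<tau> Y" unfolding orb_def by auto
      then have "Z = act_chain (\<tau> \<circ> \<sigma>) X" using Y act_comp by simp
      moreover have "\<tau> \<circ> \<sigma> permutes A" using permutes_compose[OF s t(1)] .
      ultimately show "Z \<in> orb A X" unfolding orb_def by auto
    qed
  qed
qed

lemma card_kernel:
  assumes k: "\<And>x y. x \<in> X \<Longrightarrow> y \<in> X \<Longrightarrow> f x = f y \<longleftrightarrow> g x = g y"
  shows "card (f ` X) = card (g ` X)"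
proof -
  define h where "h z = g (inv_into X f z)" for z
  have hf: "h (f x) = g x" if x: "x \<in> X" for x
  proof -
    have "inv_into X f (f x) \<in> X" "f (inv_into X f (f x)) = f x"
      using x by (auto intro: inv_into_into f_inv_into_f)
    then show ?thesis unfolding h_def using k x by blast
  qed
  have "h ` (f ` X) = g ` X" using hf by (auto simp: image_iff)
  moreover have "inj_on h (f ` X)"
  proof (rule inj_onI)
    fix z1 z2 assume "z1 \<in> f ` X" "z2 \<in> f ` X" "h z1 = h z2"
    then obtain x1 x2 where "x1 \<in> X" "x2 \<in> X" "z1 = f x1" "z2 = f x2" "h z1 = h z2" by auto
    then show "z1 = z2" using hf k by metis
  qed
  ultimately show ?thesis using card_image by metis
qed

lemma perm_exists:
  assumes "a \<in> A" "b \<in> A" "c \<in> A" "d \<in> A" "a \<noteq> b" "c \<noteq> d"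
  shows "\<exists>\<sigma>. \<sigma> permutes A \<and> \<sigma> a = c \<and> \<sigma> b = d"
proof -
  define t1 where "t1 = transpose a c"
  define t2 where "t2 = transpose (t1 b) d"
  have p1: "t1 permutes A" unfolding t1_def using assms by (intro permutes_swap_id) auto
  have b1: "t1 b \<in> A" using assms unfolding t1_def by (auto simp: transpose_def)
  have p2: "t2 permutes A" unfolding t2_def using assms b1 by (intro permutes_swap_id) auto
  have "t1 a = c" unfolding t1_def by simp
  moreover have "t1 b \<noteq> c" using assms(5) unfolding t1_def by (auto simp: transpose_def)
  ultimately have "(t2 \<circ> t1) a = c" unfolding t2_def using assms(6) by (auto simp: transpose_def)
  moreover have "(t2 \<circ> t1) b = d" unfolding t2_def by simp
  ultimately show ?thesis using permutes_compose[OF p1 p2] by blast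
qed

lemma perm_restrict:
  assumes s: "\<tau> permutes A" and BA: "B \<subseteq> A" and fx: "\<And>x. x \<in> A - B \<Longrightarrow> \<tau> x = x"
  shows "\<tau> permutes B"
  unfolding permutes_def
proof (intro conjI allI impI)
  fix x assume "x \<notin> B"
  then show "\<tau> x = x" using fx permutes_not_in[OF s] by (cases "x \<in> A") auto
next
  fix y show "\<exists>!x. \<tau> x = y" using s unfolding permutes_def by auto
qed

lemma max_has_atom:
  assumes m: "m \<ge> 2" and T0: "0 \<notin> T" and T1: "1 \<in> T" and E: "E \<in> max_chains m T"
  shows "\<exists>a b. a \<in> {1..m} \<and> b \<in> {1..m} \<and> a \<noteq> b \<and> atom m a b \<in> E"
proof -
  have Ec: "is_chain m T E" and Em: "\<And>D. is_chain m T D \<Longrightarrow> E \<subseteq> D \<Longrightarrow> D = E"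
    using E unfolding max_chains_def by auto
  have Es: "E \<subseteq> rank_sel m T" and Ecmp: "\<forall>P\<in>E. \<forall>Q\<in>E. refines P Q \<or> refines Q P"
    using Ec unfolding is_chain_def by auto
  have fin: "finite {1..m}" by simp
  have Epart: "partition_on {1..m} Q" "card Q < m" if "Q \<in> E" for Q
  proof -
    have "partition_on {1..m} Q" "m - card Q \<in> T" using Es that unfolding rank_sel_def setparts_def prank_def by auto
    moreover then have "m - card Q \<noteq> 0" using T0 by metis
    ultimately show "partition_on {1..m} Q" "card Q < m" by auto
  qed
  obtain a b where ab: "a \<in> {1..m}" "b \<in> {1..m}" "a \<noteq> b" and ref: "\<forall>Q\<in>E. refines (atom m a b) Q"
  proof (cases "E = {}")
    case True
    then show ?thesis using that[of 1 2] m by auto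
  next
    case False
    have finE: "finite E"
      using finite_subset[OF _ finitely_many_partition_on[OF fin]] Es unfolding rank_sel_def setparts_def by auto
    have "Max (card ` E) \<in> card ` E" using False finE by (intro Max_in) auto
    then obtain Q0 where Q0: "Q0 \<in> E" "card Q0 = Max (card ` E)" by auto
    have mx: "card Q \<le> card Q0" if "Q \<in> E" for Q using Q0(2) finE that by simp
    obtain B a b where B: "B \<in> Q0" "a \<in> B" "b \<in> B" "a \<noteq> b"
      using part_big_block[OF fin Epart(1)[OF Q0(1)]] Epart(2)[OF Q0(1)] by auto
    have abm: "a \<in> {1..m}" "b \<in> {1..m}" using part_sub[OF Epart(1)[OF Q0(1)] B(1)] B by auto
    have r0: "refines (atom m a b) Q0" using atom_refines[OF Epart(1)[OF Q0(1)] B(1-3)] .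
    have "refines (atom m a b) Q" if Q: "Q \<in> E" for Q
    proof -
      have "refines Q0 Q \<or> refines Q Q0" using Ecmp Q0(1) Q by auto
      then show ?thesis
      proof
        assume "refines Q0 Q" then show ?thesis using r0 refines_trans by metis
      next
        assume rq: "refines Q Q0"
        from refines_card[OF fin Epart(1)[OF Q] Epart(1)[OF Q0(1)] rq] mx[OF Q]
        have "Q0 = Q" by auto
        then show ?thesis using r0 by simp
      qed
    qed
    then show ?thesis using that abm B(4) by auto
  qed
  let ?\<alpha> = "atom m a b"
  have "?\<alpha> \<in> rank_sel m T"
    using atom_part[OF ab(1,2)] atom_card[OF ab] T1 m unfolding rank_sel_def setparts_def prank_def by auto
  moreover have "\<forall>P\<in>insert ?\<alpha> E. \<forall>Q\<in>insert ?\<alpha> E. refines P Q \<or> refines Q P"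
    using Ecmp ref refines_refl by auto
  ultimately have "is_chain m T (insert ?\<alpha> E)" using Es unfolding is_chain_def by auto
  then have "insert ?\<alpha> E = E" using Em by auto
  then show ?thesis using ab by auto
qed

lemma act_Phi:
  assumes s: "\<sigma> permutes {1..Suc n}" and f1: "\<sigma> n = n" and f2: "\<sigma> (Suc n) = Suc n"
  shows "act_chain \<sigma> (Phi n C) = Phi n (act_chain \<sigma> C)"
proof -
  have "pact \<sigma> (atom0 n) = atom0 n" unfolding atom0_def pact_atom[OF s] f1 f2 ..
  moreover have "pact \<sigma> ` lift n ` C = lift n ` pact \<sigma> ` C"
    unfolding image_image lift_pact[OF permutes_inj[OF s] f1 f2] ..
  ultimately show ?thesis unfolding act_pact Phi_def by simp
qed

theorem mainTheorem2:
  fixes n :: nat and S :: "nat set"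
  assumes "n \<ge> 3" and "S \<noteq> {}" and "S \<subseteq> {1..n-2}"
  shows "a_S ({1} \<union> (\<lambda>s. s + 1) ` S) (n + 1) = a'_S S n"
proof -
  have n: "n \<ge> 1" using assms(1) by simp
  have S0: "0 \<notin> S" using assms(3) by auto
  define T where "T = {1} \<union> (\<lambda>s. s + 1) ` S"
  define MT where "MT = max_chains (Suc n) T"
  define MS where "MS = max_chains n S"
  define G where "G = {1..Suc n}"
  define H where "H = {1..n-1}"
  have aS: "a_S T (n+1) = card (orb G ` MT)"
    unfolding a_S_def chain_orbits_def orb_def MT_def G_def by simp
  have aS': "a'_S S n = card (orb H ` MS)"
    unfolding a'_S_def chain_orbits_def orb_def MS_def H_def by simp
  have step1: "orb G ` MT = (\<lambda>C. orb G (Phi n C)) ` MS"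
  proof
    show "(\<lambda>C. orb G (Phi n C)) ` MS \<subseteq> orb G ` MT"
      using Phi_max[OF n S0] unfolding MS_def MT_def T_def by auto
    show "orb G ` MT \<subseteq> (\<lambda>C. orb G (Phi n C)) ` MS"
    proof
      fix x assume "x \<in> orb G ` MT"
      then obtain E where E: "E \<in> MT" "x = orb G E" by auto
      have "0 \<notin> T" "1 \<in> T" unfolding T_def by auto
      then obtain a b where ab: "a \<in> {1..Suc n}" "b \<in> {1..Suc n}" "a \<noteq> b" "atom (Suc n) a b \<in> E"
        using max_has_atom[of "Suc n" T E] E(1) n unfolding MT_def by auto
      obtain \<sigma> where s: "\<sigma> permutes G" "\<sigma> a = n" "\<sigma> b = Suc n"
        using perm_exists[of a G b n "Suc n"] ab n unfolding G_def by auto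
      define E' where "E' = act_chain \<sigma> E"
      have E'M: "E' \<in> MT" unfolding E'_def using act_max[OF s(1)[unfolded G_def]] E(1) unfolding MT_def by auto
      have "pact \<sigma> (atom (Suc n) a b) = atom0 n"
        using pact_atom[OF s(1)[unfolded G_def]] s(2,3) unfolding atom0_def by simp
      then have "atom0 n \<in> E'" using ab(4) unfolding E'_def act_pact by force
      then have pm: "Psi n E' \<in> MS \<and> Phi n (Psi n E') = E'"
        using Psi_max[OF n S0, of E'] E'M unfolding MT_def MS_def T_def by auto
      have "orb G E = orb G E'" unfolding E'_def using orb_eq s(1) by blast
      then have "x = orb G (Phi n (Psi n E'))" using E(2) pm by simp
      moreover have "Psi n E' \<in> MS" using pm by simp
      ultimately show "x \<in> (\<lambda>C. orb G (Phi n C)) ` MS" by (rule image_eqI)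
    qed
  qed
  have kern: "orb G (Phi n C1) = orb G (Phi n C2) \<longleftrightarrow> orb H C1 = orb H C2"
    if C1: "C1 \<in> MS" and C2: "C2 \<in> MS" for C1 C2
  proof
    assume "orb H C1 = orb H C2"
    then obtain \<sigma> where s: "\<sigma> permutes H" "act_chain \<sigma> C1 = C2" using orb_eq by blast
    have sG: "\<sigma> permutes {1..Suc n}" by (rule permutes_subset[OF s(1)]) (auto simp: H_def)
    have f: "\<sigma> n = n" "\<sigma> (Suc n) = Suc n" using permutes_not_in[OF s(1)] n unfolding H_def by auto
    have "act_chain \<sigma> (Phi n C1) = Phi n C2" using act_Phi[OF sG f] s(2) by simp
    then show "orb G (Phi n C1) = orb G (Phi n C2)" using orb_eq sG unfolding G_def by blast
  next
    assume "orb G (Phi n C1) = orb G (Phi n C2)"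
    then obtain \<sigma> where s: "\<sigma> permutes {1..Suc n}" and sa: "act_chain \<sigma> (Phi n C1) = Phi n C2"
      using orb_eq unfolding G_def by blast
    have C1c: "is_chain n S C1" using C1 unfolding MS_def max_chains_def by auto
    have C1s: "C1 \<subseteq> rank_sel n S" using C1c unfolding is_chain_def by auto
    have "atom0 n \<in> act_chain \<sigma> (Phi n C1)" using sa unfolding Phi_def by auto
    then obtain Q where Q: "Q \<in> Phi n C1" "pact \<sigma> Q = atom0 n" unfolding act_pact by auto
    have Qa: "Q = atom0 n"
    proof (rule ccontr)
      assume "Q \<noteq> atom0 n"
      then obtain P where P: "P \<in> C1" "Q = lift n P" using Q(1) unfolding Phi_def by auto
      have p: "partition_on {1..n} P" "card P < n" using rs_D[OF _ S0, of P n] C1s P(1) by auto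
      have "card (atom0 n) = card P" using Q(2) pact_card[OF s, of Q] lift_card[OF p(1)] P(2) by simp
      then show False using atom0_card[OF n] p(2) by simp
    qed
    then have "atom (Suc n) (\<sigma> n) (\<sigma> (Suc n)) = atom (Suc n) n (Suc n)"
      using Q(2) pact_atom[OF s] unfolding atom0_def by simp
    moreover have "\<sigma> n \<noteq> \<sigma> (Suc n)" using permutes_inj[OF s] by (metis inj_eq n_not_Suc_n)
    ultimately have "{\<sigma> n, \<sigma> (Suc n)} = {n, Suc n}" using atom_eq by blast
    then have cs: "(\<sigma> n = n \<and> \<sigma> (Suc n) = Suc n) \<or> (\<sigma> n = Suc n \<and> \<sigma> (Suc n) = n)"
      by (auto simp: doubleton_eq_iff)
    define \<tau> where "\<tau> = (if \<sigma> n = n then \<sigma> else \<sigma> \<circ> transpose n (Suc n))"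
    have tp: "\<tau> permutes {1..Suc n}" unfolding \<tau>_def
      using permutes_compose[OF permutes_swap_id[of n "{1..Suc n}" "Suc n"] s] n s by auto
    have tf: "\<tau> n = n" "\<tau> (Suc n) = Suc n" using cs unfolding \<tau>_def by auto
    have tl: "pact \<tau> (lift n P) = pact \<sigma> (lift n P)" if "partition_on {1..n} P" for P
      using cs swap_lift[OF that] pact_comp unfolding \<tau>_def by auto
    have ta: "pact \<tau> (atom0 n) = pact \<sigma> (atom0 n)"
    proof -
      have "pact \<tau> (atom0 n) = atom0 n" using pact_atom[OF tp] tf unfolding atom0_def by simp
      then show ?thesis using Q(2) Qa by simp
    qed
    have "act_chain \<tau> (Phi n C1) = act_chain \<sigma> (Phi n C1)"
    proof -
      have "pact \<tau> ` lift n ` C1 = pact \<sigma> ` lift n ` C1"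
        unfolding image_image by (rule image_cong) (use tl rs_D[OF _ S0] C1s in auto)
      then show ?thesis unfolding act_pact Phi_def using ta by simp
    qed
    then have "Phi n (act_chain \<tau> C1) = Phi n C2" using act_Phi[OF tp tf] sa by simp
    then have "Psi n (Phi n (act_chain \<tau> C1)) = Psi n (Phi n C2)" by simp
    moreover have tH: "\<tau> permutes {1..n-1}"
    proof (rule perm_restrict[OF tp])
      show "{1..n-1} \<subseteq> {1..Suc n}" by auto
      fix x assume "x \<in> {1..Suc n} - {1..n-1}"
      then have "x = n \<or> x = Suc n" using n by auto
      then show "\<tau> x = x" using tf by auto
    qed
    moreover have "\<tau> permutes {1..n}" using permutes_subset[OF tH] by auto
    then have "is_chain n S (act_chain \<tau> C1)" using act_chain_ok C1c by auto
    then have "act_chain \<tau> C1 \<subseteq> rank_sel n S" unfolding is_chain_def by auto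
    moreover have "C2 \<subseteq> rank_sel n S" using C2 unfolding MS_def max_chains_def is_chain_def by auto
    ultimately have "act_chain \<tau> C1 = C2" using Psi_Phi[OF n S0] by metis
    then show "orb H C1 = orb H C2" using orb_eq tH unfolding H_def by blast
  qed
  have "card ((\<lambda>C. orb G (Phi n C)) ` MS) = card (orb H ` MS)"
    by (rule card_kernel) (use kern in auto)
  then show ?thesis using aS aS' step1 unfolding T_def by simp
qed

end
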